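(* Let $b\ge 2$ be an integer, $d\in\{0,1,\dots,b-1\}$, and $d'=b-1-d$. For $i\ge1$ put $\gamma'_i=\sum_{0\le a<b,\ a\ne d'}a^i$. Define $v_{0;m}$ for $m\ge0$ recursively by $$(b^{m+1}-b+1)\,v_{0;m}=b^{m+1}+\sum_{i=1}^{m}\binom{m}{i}\gamma'_i\,v_{0;m-i},$$ and for $j\ge1$, $m\ge0$, define $v_{j;m}$ recursively by $$(b^{m+1}-b+1)\,v_{j;m}=\sum_{i=1}^{m}\binom{m}{i}\gamma'_i\,v_{j;m-i}+\sum_{i=0}^{m}\binom{m}{i}(d')^i\,v_{j-1;m-i}$$ (with $0^0=1$). In particular $v_{j;0}=b$ for all $j\ge0$. Then for every $l\ge1$ and $k\ge0$, $$H^{(k)}=\sum_{\substack{0<n<b^{l-1}\\ k(n)=k}}\frac1n\;+\;b\sum_{\substack{b^{l-1}\le n<b^{l}\\ k(n)\le k}}\frac1{n+1}\;+\;\sum_{m=1}^{\infty}\ \sum_{\substack{b^{l-1}\le n<b^{l}\\ k(n)\le k}}\frac{v_{k-k(n);m}}{(n+1)^{m+1}}.$$ Moreover, the numbers $v_{j;m}$ ($j\ge0$, $m\ge1$) satisfy: (i) $0<v_{j;m}\le b$; (ii) for fixed $j$, $(v_{j;m})_{m\ge0}$ is strictly decreasing, except when $b=2$, $d=1$, $j=0$, in which case $v_{0;m}=2$ for all $m$; (iii) for each fixed $m\ge1$, $(v_{j;m})_{j\ge0}$ is strictly decreasing and converges to $b/(m+1)$.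
   Context: For an integer $n\ge0$, its (minimal) base-$b$ representation is the string of base-$b$ digits of $n$ without leading zeros (the empty string for $n=0$); $k(n)$ denotes the number of occurrences of the digit $d$ in this representation. For $k\ge0$, the Irwin sum is $H^{(k)}=\sum_{n\ge1,\ k(n)=k}1/n$ (a convergent series of positive terms; it equals $0$ when $b=2$, $d=1$, $k=0$). *)

theory Defs
  imports "HOL-Analysis.Analysis"
begin

function base_digits :: "nat \<Rightarrow> nat \<Rightarrow> nat list" where
  "base_digits b n = (if n = 0 \<or> b < 2 then [] else n mod b # base_digits b (n div b))"
  by auto
termination by (relation "Wellfounded.measure snd") auto

definition digit_count :: "nat \<Rightarrow> nat \<Rightarrow> nat \<Rightarrow> nat" where
  "digit_count b d n = count_list (base_digits b n) d"

definition irwin_sum :: "nat \<Rightarrow> nat \<Rightarrow> nat \<Rightarrow> real" where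
  "irwin_sum b d k = infsum (\<lambda>n. 1 / real n) {n. 0 < n \<and> digit_count b d n = k}"

definition gamma' :: "nat \<Rightarrow> nat \<Rightarrow> nat \<Rightarrow> real" where
  "gamma' b d i = (\<Sum>a\<in>{a. a < b \<and> a \<noteq> b - 1 - d}. real a ^ i)"

fun vv :: "nat \<Rightarrow> nat \<Rightarrow> nat \<Rightarrow> nat \<Rightarrow> real" where
  "vv b d 0 m =
     (real b ^ (m+1) + (\<Sum>i\<in>{1..m}. real (m choose i) * gamma' b d i * vv b d 0 (m - i)))
     / (real b ^ (m+1) - real b + 1)"
| "vv b d (Suc j) m =
     ((\<Sum>i\<in>{1..m}. real (m choose i) * gamma' b d i * vv b d (Suc j) (m - i))
      + (\<Sum>i\<in>{0..m}. real (m choose i) * real (b - 1 - d) ^ i * vv b d j (m - i)))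
     / (real b ^ (m+1) - real b + 1)"

end

theory Submission
  imports Defs
begin

declare base_digits.simps[simp del] vv.simps[simp del]

fun cnt :: "nat \<Rightarrow> nat \<Rightarrow> nat \<Rightarrow> nat \<Rightarrow> nat" where
  "cnt b d 0 s = 0"
| "cnt b d (Suc r) s = (if s mod b = d then 1 else 0) + cnt b d r (s div b)"

lemma base_digits_pos: "b \<ge> 2 \<Longrightarrow> N > 0 \<Longrightarrow> base_digits b N = N mod b # base_digits b (N div b)"
  by (subst base_digits.simps) auto

lemma dc_pos: "b \<ge> 2 \<Longrightarrow> N > 0 \<Longrightarrow> digit_count b d N = (if N mod b = d then 1 else 0) + digit_count b d (N div b)"
  unfolding digit_count_def by (subst base_digits_pos) auto

lemma dc_split:
  assumes "b \<ge> 2" "n > 0"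
  shows "s < b ^ r \<Longrightarrow> digit_count b d (n * b ^ r + s) = digit_count b d n + cnt b d r s"
proof (induction r arbitrary: s)
  case 0 then show ?case by simp
next
  case (Suc r)
  have pos: "n * b ^ Suc r + s > 0" using assms by simp
  have m: "(n * b ^ Suc r + s) mod b = s mod b"
    by (simp add: mult.commute mult.left_commute)
  have dv: "(n * b ^ Suc r + s) div b = n * b ^ r + s div b"
    using assms by (simp add: mult.commute mult.left_commute)
  have "s div b < b ^ r" using Suc.prems assms
    by (simp add: div_less_iff_less_mult mult.commute)
  then have ih: "digit_count b d (n * b ^ r + s div b) = digit_count b d n + cnt b d r (s div b)"
    by (rule Suc.IH)
  have "digit_count b d (n * b ^ Suc r + s) = (if s mod b = d then 1 else 0) + digit_count b d (n * b ^ r + s div b)"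
    using dc_pos[OF assms(1) pos, of d] unfolding m dv .
  then show ?case using ih by simp
qed

lemma cnt_lead:
  assumes "b \<ge> 2" "a < b"
  shows "s < b ^ r \<Longrightarrow> cnt b d (Suc r) (a * b ^ r + s) = (if a = d then 1 else 0) + cnt b d r s"
proof (induction r arbitrary: s)
  case 0 then show ?case using assms by simp
next
  case (Suc r)
  have e: "a * b ^ Suc r + s = s + (a*b^r) * b" by (simp add: algebra_simps)
  have m: "(a * b ^ Suc r + s) mod b = s mod b"
    unfolding e by simp
  have dv: "(a * b ^ Suc r + s) div b = a * b ^ r + s div b"
    unfolding e using assms by simp
  have "s div b < b ^ r" using Suc.prems assms
    by (simp add: div_less_iff_less_mult mult.commute)
  then have ih: "cnt b d (Suc r) (a * b ^ r + s div b) = (if a = d then 1 else 0) + cnt b d r (s div b)"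
    by (rule Suc.IH)
  have "cnt b d (Suc (Suc r)) (a * b ^ Suc r + s) = (if s mod b = d then 1 else 0) + cnt b d (Suc r) (a * b ^ r + s div b)"
    by (simp only: cnt.simps m dv)
  then show ?case using ih by simp
qed

lemma exists_r:
  fixes b l N :: nat
  assumes "b \<ge> 2" "l \<ge> 1"
  shows "b ^ (l - 1) \<le> N \<Longrightarrow> \<exists>r. b ^ (l - 1) \<le> N div b ^ r \<and> N div b ^ r < b ^ l"
proof (induction N rule: less_induct)
  case (less N)
  show ?case
  proof (cases "N < b ^ l")
    case True then show ?thesis using less.prems by (intro exI[of _ 0]) simp
  next
    case False
    have "b ^ l = b ^ (l - 1) * b" using assms
      by (cases l) auto
    then have ge: "b ^ (l - 1) \<le> N div b" using False assms
      by (simp add: less_eq_div_iff_mult_less_eq)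
    have "N div b < N" using assms less.prems False
      proof -
      have "b ^ l > 0" using assms(1) by simp
      then have "N > 0" using False by linarith
      then show ?thesis using assms(1) by (intro div_less_dividend) auto
    qed
    from less.IH[OF this ge] obtain r where "b ^ (l - 1) \<le> N div b div b ^ r" "N div b div b ^ r < b ^ l" by blast
    then show ?thesis by (intro exI[of _ "Suc r"]) (simp add: div_mult2_eq mult.commute)
  qed
qed


definition gg :: "nat \<Rightarrow> nat \<Rightarrow> nat \<Rightarrow> nat \<Rightarrow> nat \<Rightarrow> real" where
  "gg b d j m r = (\<Sum>s<b^r. if cnt b d r s = j then (1 - real s / real b ^ r) ^ m / real b ^ r else 0)"

lemma sum_split_digit:
  fixes F :: "nat \<Rightarrow> real"
  shows "(\<Sum>s<b ^ Suc r. F s) = (\<Sum>a<b. \<Sum>s<b^r. F (a * b ^ r + s))"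
proof -
  have "(\<Sum>s<b ^ Suc r. F s) = (\<Sum>a<b. sum F {a * b^r ..< a * b^r + b^r})"
    using sum.nat_group[of F "b^r" b] by (simp add: mult.commute)
  also have "\<dots> = (\<Sum>a<b. \<Sum>s<b^r. F (a * b ^ r + s))"
  proof (rule sum.cong[OF refl])
    fix a
    show "sum F {a * b^r ..< a * b^r + b^r} = (\<Sum>s<b^r. F (a * b ^ r + s))"
      by (subst sum.atLeastLessThan_shift_0) (simp add: atLeast0LessThan comp_def)
  qed
  finally show ?thesis .
qed

lemma gamma'_split:
  assumes "d < b"
  shows "(\<Sum>a<b. real (b - 1 - a) ^ i * (if a = d then Y else Z))
         = gamma' b d i * Z + real (b - 1 - d) ^ i * Y"
proof -
  let ?dp = "b - 1 - d"
  define h where "h c = real c ^ i * (if c = ?dp then Y else Z)" for c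
  have "(\<Sum>a<b. real (b - 1 - a) ^ i * (if a = d then Y else Z)) = (\<Sum>a<b. h (b - Suc a))"
  proof (intro sum.cong refl)
    fix a assume "a \<in> {..<b}"
    then have "(b - Suc a = ?dp) = (a = d)" using assms by auto
    then show "real (b - 1 - a) ^ i * (if a = d then Y else Z) = h (b - Suc a)"
      unfolding h_def by simp
  qed
  also have "\<dots> = (\<Sum>a<b. h a)" by (rule sum.nat_diff_reindex)
  also have "\<dots> = h ?dp + (\<Sum>a\<in>{..<b} - {?dp}. h a)"
    using assms by (intro sum.remove) auto
  also have "(\<Sum>a\<in>{..<b} - {?dp}. h a) = (\<Sum>a\<in>{..<b} - {?dp}. real a ^ i * Z)"
    unfolding h_def by (intro sum.cong refl) auto
  also have "\<dots> = gamma' b d i * Z"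
    unfolding gamma'_def sum_distrib_right
    by (intro sum.cong refl) auto
  finally show ?thesis unfolding h_def by simp
qed

lemma gg_rec:
  assumes "b \<ge> 2" "d < b"
  shows "gg b d j m (Suc r) =
    (\<Sum>i\<le>m. real (m choose i) * (gamma' b d i * gg b d j (m - i) r
        + (if j > 0 then real (b - 1 - d) ^ i * gg b d (j - 1) (m - i) r else 0))) / real b ^ (m + 1)"
proof -
  let ?B = "real b"
  define F where "F s = (if cnt b d (Suc r) s = j then (1 - real s / ?B ^ Suc r) ^ m / ?B ^ Suc r else 0)" for s
  define c where "c a = real (b - 1 - a)" for a
  define y where "y s = 1 - real s / ?B ^ r" for s
  define T where "T a i = (\<Sum>s<b^r. if (if a = d then 1 else 0) + cnt b d r s = j then y s ^ (m - i) / ?B ^ r else 0)" for a i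
  have Bpos: "?B > 0" using assms by simp
  have key: "F (a * b ^ r + s) = (\<Sum>i\<le>m. real (m choose i) * c a ^ i *
        (if (if a = d then 1 else 0) + cnt b d r s = j then y s ^ (m - i) / ?B ^ r else 0)) / ?B ^ (m + 1)"
    if "a < b" "s < b ^ r" for a s
  proof -
    have e1: "1 - real (a * b ^ r + s) / ?B ^ Suc r = (c a + y s) / ?B"
      using that Bpos by (simp add: c_def y_def of_nat_diff field_simps)
    have e2: "((c a + y s) / ?B) ^ m / ?B ^ Suc r = (c a + y s) ^ m / ?B ^ (m+1) / ?B ^ r"
      using Bpos by (simp add: power_divide field_simps power_add)
    show ?thesis
      unfolding F_def cnt_lead[OF assms(1) that(1,2)] e1 e2 binomial_ring[of "c a" "y s" m]
      by (auto simp: sum_divide_distrib sum_distrib_left intro!: sum.cong)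
  qed
  have "gg b d j m (Suc r) = (\<Sum>s<b ^ Suc r. F s)"
    unfolding gg_def F_def by simp
  also have "\<dots> = (\<Sum>a<b. \<Sum>s<b^r. F (a * b ^ r + s))" by (rule sum_split_digit)
  also have "\<dots> = (\<Sum>a<b. \<Sum>s<b^r. (\<Sum>i\<le>m. real (m choose i) * c a ^ i *
        (if (if a = d then 1 else 0) + cnt b d r s = j then y s ^ (m - i) / ?B ^ r else 0)) / ?B ^ (m + 1))"
    by (intro sum.cong refl key) auto
  also have "\<dots> = (\<Sum>i\<le>m. real (m choose i) * (\<Sum>a<b. c a ^ i * T a i)) / ?B ^ (m + 1)"
    unfolding T_def sum_divide_distrib[symmetric]
    apply (subst sum.swap)
    apply (subst (2) sum.swap)
    apply (simp add: sum_distrib_left mult.assoc)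
    done
  also have "\<dots> = (\<Sum>i\<le>m. real (m choose i) * (gamma' b d i * gg b d j (m - i) r
        + (if j > 0 then real (b - 1 - d) ^ i * gg b d (j - 1) (m - i) r else 0))) / ?B ^ (m + 1)"
  proof -
    have "T a i = (if a = d then (if j > 0 then gg b d (j - 1) (m - i) r else 0) else gg b d j (m - i) r)" for a i
      unfolding T_def gg_def y_def by (cases "a = d"; cases j) auto
    then have "(\<Sum>a<b. c a ^ i * T a i) = gamma' b d i * gg b d j (m - i) r
        + (if j > 0 then real (b - 1 - d) ^ i * gg b d (j - 1) (m - i) r else 0)" for i
      unfolding c_def using gamma'_split[OF assms(2), of i "if j > 0 then gg b d (j - 1) (m - i) r else 0" "gg b d j (m - i) r"]
      by simp
    then show ?thesis by simp
  qed
  finally show ?thesis .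
qed


definition LL :: "nat \<Rightarrow> nat \<Rightarrow> (nat \<Rightarrow> nat \<Rightarrow> real) \<Rightarrow> nat \<Rightarrow> nat \<Rightarrow> real" where
  "LL b d X j m = (\<Sum>i\<le>m. real (m choose i) * (gamma' b d i * X j (m - i)
        + (if j > 0 then real (b - 1 - d) ^ i * X (j - 1) (m - i) else 0)))"

lemma gamma'_nonneg: "gamma' b d i \<ge> 0"
  unfolding gamma'_def by (intro sum_nonneg) auto

lemma gamma'_0: "d < b \<Longrightarrow> gamma' b d 0 = real b - 1"
proof -
  assume "d < b"
  have "{a. a < b \<and> a \<noteq> b - 1 - d} = {..<b} - {b - 1 - d}" by auto
  moreover have "card ({..<b} - {b - 1 - d}) = b - 1" using \<open>d < b\<close> by (subst card_Diff_singleton) auto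
  ultimately show ?thesis using \<open>d < b\<close> unfolding gamma'_def by (simp add: of_nat_diff)
qed

lemma sum_atMost_split0: fixes m :: nat shows "(\<Sum>i\<le>m. f i) = f 0 + (\<Sum>i\<in>{1..m}. (f i :: real))"
proof -
  have "(\<Sum>i\<le>m. f i) = f 0 + (\<Sum>i\<in>{..m} - {0}. f i)" by (rule sum.remove) auto
  moreover have "{..m} - {0} = {1..m}" by auto
  ultimately show ?thesis by simp
qed

lemma LL_split:
  assumes "d < b"
  shows "LL b d X j m = (real b - 1) * X j m + (\<Sum>i\<in>{1..m}. real (m choose i) * gamma' b d i * X j (m - i))
     + (if j > 0 then (\<Sum>i\<le>m. real (m choose i) * real (b - 1 - d) ^ i * X (j - 1) (m - i)) else 0)"
  unfolding LL_def distrib_left sum.distrib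
  by (simp add: sum_atMost_split0[of "\<lambda>i. real (m choose i) * (gamma' b d i * X j (m - i))"] gamma'_0[OF assms]
       mult.assoc sum.distrib)

lemma Bm_pos: "b \<ge> 2 \<Longrightarrow> real b ^ (m + 1) - real b + 1 > 0"
proof -
  assume "b \<ge> 2"
  then have "real b ^ 1 \<le> real b ^ (m + 1)" by (intro power_increasing) auto
  then show ?thesis by simp
qed

lemma vv_rec:
  assumes "b \<ge> 2" "d < b"
  shows "real b ^ (m + 1) * vv b d j m = (if j = 0 then real b ^ (m + 1) else 0) + LL b d (vv b d) j m"
proof (cases j)
  case 0
  have "vv b d 0 m = (real b ^ (m+1) + (\<Sum>i\<in>{1..m}. real (m choose i) * gamma' b d i * vv b d 0 (m - i)))
     / (real b ^ (m+1) - real b + 1)" by (rule vv.simps(1))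
  then have "(real b ^ (m+1) - real b + 1) * vv b d 0 m = real b ^ (m+1) + (\<Sum>i\<in>{1..m}. real (m choose i) * gamma' b d i * vv b d 0 (m - i))"
    using Bm_pos[OF assms(1), of m] by (simp add: field_simps)
  then show ?thesis using 0 by (simp add: LL_split[OF assms(2)] algebra_simps)
next
  case (Suc j')
  have "vv b d (Suc j') m = ((\<Sum>i\<in>{1..m}. real (m choose i) * gamma' b d i * vv b d (Suc j') (m - i))
      + (\<Sum>i\<in>{0..m}. real (m choose i) * real (b - 1 - d) ^ i * vv b d j' (m - i)))
     / (real b ^ (m+1) - real b + 1)" by (rule vv.simps(2))
  then have "(real b ^ (m+1) - real b + 1) * vv b d (Suc j') m = (\<Sum>i\<in>{1..m}. real (m choose i) * gamma' b d i * vv b d (Suc j') (m - i))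
      + (\<Sum>i\<le>m. real (m choose i) * real (b - 1 - d) ^ i * vv b d j' (m - i))"
    using Bm_pos[OF assms(1), of m] by (simp add: field_simps atLeast0AtMost)
  then show ?thesis using Suc by (simp add: LL_split[OF assms(2)] algebra_simps)
qed

lemma vv_pos:
  assumes "b \<ge> 2" "d < b"
  shows "vv b d j m > 0"
proof (induction j arbitrary: m)
  case 0
  show ?case
  proof (induction m rule: less_induct)
    case (less m)
    have "0 \<le> (\<Sum>i\<in>{1..m}. real (m choose i) * gamma' b d i * vv b d 0 (m - i))"
      using less.IH by (intro sum_nonneg mult_nonneg_nonneg gamma'_nonneg) (auto intro!: less_imp_le[OF less.IH])
    moreover have "real b ^ (m+1) > 0" using assms by simp
    ultimately show ?case using Bm_pos[OF assms(1), of m] by (subst vv.simps(1)) (intro divide_pos_pos; simp)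
  qed
next
  case (Suc j)
  show ?case
  proof (induction m rule: less_induct)
    case (less m)
    have "0 \<le> (\<Sum>i\<in>{1..m}. real (m choose i) * gamma' b d i * vv b d (Suc j) (m - i))"
      using less.IH by (intro sum_nonneg mult_nonneg_nonneg gamma'_nonneg) (auto intro!: less_imp_le[OF less.IH])
    moreover have "0 < (\<Sum>i\<in>{0..m}. real (m choose i) * real (b - 1 - d) ^ i * vv b d j (m - i))"
    proof -
      have "(\<Sum>i\<in>{0..m}. real (m choose i) * real (b - 1 - d) ^ i * vv b d j (m - i))
         = vv b d j m + (\<Sum>i\<in>{1..m}. real (m choose i) * real (b - 1 - d) ^ i * vv b d j (m - i))"
        using sum_atMost_split0[of "\<lambda>i. real (m choose i) * real (b - 1 - d) ^ i * vv b d j (m - i)" m]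
        by (simp add: atLeast0AtMost)
      moreover have "0 \<le> (\<Sum>i\<in>{1..m}. real (m choose i) * real (b - 1 - d) ^ i * vv b d j (m - i))"
        using Suc.IH by (intro sum_nonneg mult_nonneg_nonneg) (auto intro!: less_imp_le[OF Suc.IH])
      ultimately show ?thesis using Suc.IH[of m] by linarith
    qed
    ultimately show ?case using Bm_pos[OF assms(1), of m] by (subst vv.simps(2)) (intro divide_pos_pos; simp)
  qed
qed

lemma LL_sum: "(\<Sum>r\<in>A. LL b d (X r) j m) = LL b d (\<lambda>j m. \<Sum>r\<in>A. X r j m) j m"
  unfolding LL_def
  by (subst sum.swap) (cases "j > 0"; simp add: sum_distrib_left sum.distrib distrib_left mult.assoc)

lemma LL_mono:
  assumes "\<And>j' m'. X j' m' \<le> Y j' m'"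
  shows "LL b d X j m \<le> LL b d Y j m"
  unfolding LL_def
  by (intro sum_mono mult_left_mono add_mono mult_left_mono assms gamma'_nonneg) (auto intro!: mult_left_mono assms)

lemma LL_suminf:
  assumes "\<And>j' m'. summable (\<lambda>r. X r j' m')"
  shows "summable (\<lambda>r. LL b d (X r) j m) \<and> (\<Sum>r. LL b d (X r) j m) = LL b d (\<lambda>j m. \<Sum>r. X r j m) j m"
proof -
  have s1: "summable (\<lambda>r. real (m choose i) * (gamma' b d i * X r j (m - i)
        + (if j > 0 then real (b - 1 - d) ^ i * X r (j - 1) (m - i) else 0)))" for i
    by (cases "j > 0") (auto intro!: summable_mult summable_add assms)
  have "(\<Sum>r. LL b d (X r) j m) = (\<Sum>i\<le>m. \<Sum>r. real (m choose i) * (gamma' b d i * X r j (m - i)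
        + (if j > 0 then real (b - 1 - d) ^ i * X r (j - 1) (m - i) else 0)))"
    unfolding LL_def by (rule suminf_sum) (rule s1)
  also have "\<dots> = LL b d (\<lambda>j m. \<Sum>r. X r j m) j m"
    unfolding LL_def
  proof (rule sum.cong[OF refl])
    fix i
    show "(\<Sum>r. real (m choose i) * (gamma' b d i * X r j (m - i)
        + (if j > 0 then real (b - 1 - d) ^ i * X r (j - 1) (m - i) else 0))) =
       real (m choose i) * (gamma' b d i * (\<Sum>r. X r j (m - i))
        + (if j > 0 then real (b - 1 - d) ^ i * (\<Sum>r. X r (j - 1) (m - i)) else 0))"
    proof (cases "j > 0")
      case True
      have a1: "summable (\<lambda>r. gamma' b d i * X r j (m - i))" by (intro summable_mult assms)
      have a2: "summable (\<lambda>r. real (b - 1 - d) ^ i * X r (j - 1) (m - i))" by (intro summable_mult assms)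
      have "(\<Sum>r. real (m choose i) * (gamma' b d i * X r j (m - i) + real (b - 1 - d) ^ i * X r (j - 1) (m - i)))
          = real (m choose i) * (\<Sum>r. (gamma' b d i * X r j (m - i) + real (b - 1 - d) ^ i * X r (j - 1) (m - i)))"
        by (intro suminf_mult summable_add a1 a2)
      also have "(\<Sum>r. (gamma' b d i * X r j (m - i) + real (b - 1 - d) ^ i * X r (j - 1) (m - i)))
          = (\<Sum>r. gamma' b d i * X r j (m - i)) + (\<Sum>r. real (b - 1 - d) ^ i * X r (j - 1) (m - i))"
        by (rule suminf_add[symmetric]) (intro a1 a2)+
      also have "\<dots> = gamma' b d i * (\<Sum>r. X r j (m - i)) + real (b - 1 - d) ^ i * (\<Sum>r. X r (j - 1) (m - i))"
        using assms by (simp add: suminf_mult)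
      finally show ?thesis using True by simp
    next
      case False
      then show ?thesis using assms by (simp add: suminf_mult summable_mult)
    qed
  qed
  moreover have "summable (\<lambda>r. LL b d (X r) j m)" unfolding LL_def by (rule summable_sum) (rule s1)
  ultimately show ?thesis by simp
qed

lemma gg_rec2:
  assumes "b \<ge> 2" "d < b"
  shows "gg b d j m (Suc r) = LL b d (\<lambda>j m. gg b d j m r) j m / real b ^ (m + 1)"
  unfolding gg_rec[OF assms] LL_def ..

lemma gg_0: "gg b d j m 0 = (if j = 0 then 1 else 0)"
  unfolding gg_def by simp

lemma gg_nonneg: "gg b d j m r \<ge> 0"
  unfolding gg_def
proof (intro sum_nonneg)
  fix x assume "x \<in> {..<b ^ r}"
  then have "real x \<le> real (b ^ r)" by simp
  then have "real x / real b ^ r \<le> 1"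
    by (cases "b = 0") (auto simp: divide_le_eq_1)
  then show "0 \<le> (if cnt b d r x = j then (1 - real x / real b ^ r) ^ m / real b ^ r else 0)" by auto
qed

lemma vv_ge1: assumes "b \<ge> 2" "d < b" shows "vv b d 0 m \<ge> 1"
proof -
  have B: "real b ^ (m + 1) * 1 \<le> real b ^ (m + 1) * vv b d 0 m"
  proof -
    have "LL b d (vv b d) 0 m \<ge> 0" unfolding LL_def
      by (intro sum_nonneg) (auto intro!: mult_nonneg_nonneg gamma'_nonneg less_imp_le[OF vv_pos[OF assms]])
    then show ?thesis using vv_rec[OF assms, of m 0] by simp
  qed
  have Bp: "real b ^ (m + 1) > 0" using assms by simp
  show ?thesis using B unfolding mult_le_cancel_left_pos[OF Bp] .
qed

lemma gg_partial:
  assumes "b \<ge> 2" "d < b"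
  shows "\<forall>j m. (\<Sum>r<R. gg b d j m r) \<le> vv b d j m"
proof (induction R)
  case 0 then show ?case using vv_pos[OF assms] by (simp add: less_imp_le)
next
  case (Suc R)
  show ?case
  proof (intro allI)
    fix j m
    have Bp: "real b ^ (m + 1) > 0" using assms by simp
    have "(\<Sum>r<Suc R. gg b d j m r) = gg b d j m 0 + (\<Sum>r<R. gg b d j m (Suc r))"
      by (rule sum.lessThan_Suc_shift)
    also have "\<dots> = (if j = 0 then 1 else 0) + LL b d (\<lambda>j m. \<Sum>r<R. gg b d j m r) j m / real b ^ (m + 1)"
      unfolding gg_0 gg_rec2[OF assms] sum_divide_distrib[symmetric] LL_sum ..
    also have "\<dots> \<le> (if j = 0 then 1 else 0) + LL b d (vv b d) j m / real b ^ (m + 1)"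
      using Suc.IH Bp by (intro add_left_mono divide_right_mono LL_mono) auto
    also have "\<dots> = vv b d j m"
    proof -
      have e: "real b ^ (m + 1) * vv b d j m = (if j = 0 then real b ^ (m + 1) else 0) + LL b d (vv b d) j m"
        by (rule vv_rec[OF assms])
      have "vv b d j m = ((if j = 0 then real b ^ (m + 1) else 0) + LL b d (vv b d) j m) / real b ^ (m + 1)"
        using Bp assms by (simp add: e[symmetric])
      then show ?thesis using Bp assms by (cases "j = 0") (simp_all add: add_divide_distrib)
    qed
    finally show "(\<Sum>r<Suc R. gg b d j m r) \<le> vv b d j m" .
  qed
qed

lemma gg_summable:
  assumes "b \<ge> 2" "d < b"
  shows "summable (gg b d j m)"
  using gg_partial[OF assms] gg_nonneg by (intro summableI_nonneg_bounded) auto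

lemma suminf_gg_rec:
  assumes "b \<ge> 2" "d < b"
  shows "real b ^ (m + 1) * (\<Sum>r. gg b d j m r) = (if j = 0 then real b ^ (m + 1) else 0)
          + LL b d (\<lambda>j m. \<Sum>r. gg b d j m r) j m"
proof -
  have Bp: "real b ^ (m + 1) > 0" using assms by simp
  have S: "\<And>j m. summable (gg b d j m)" by (rule gg_summable[OF assms])
  have "(\<Sum>r. gg b d j m r) = gg b d j m 0 + (\<Sum>r. gg b d j m (Suc r))"
    using suminf_split_head[OF S] by simp
  also have "(\<Sum>r. gg b d j m (Suc r)) = (\<Sum>r. LL b d (\<lambda>j m. gg b d j m r) j m) / real b ^ (m + 1)"
    unfolding gg_rec2[OF assms]
    by (rule suminf_divide) (rule LL_suminf[THEN conjunct1], rule S)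
  also have "(\<Sum>r. LL b d (\<lambda>j m. gg b d j m r) j m) = LL b d (\<lambda>j m. \<Sum>r. gg b d j m r) j m"
    by (rule LL_suminf[THEN conjunct2]) (rule S)
  finally have G: "(\<Sum>r. gg b d j m r) = (if j = 0 then 1 else 0) + LL b d (\<lambda>j m. \<Sum>r. gg b d j m r) j m / real b ^ (m + 1)"
    by (simp add: gg_0)
  have "real b ^ (m + 1) * ((if j = 0 then 1 else 0) + LL b d (\<lambda>j m. \<Sum>r. gg b d j m r) j m / real b ^ (m + 1))
      = (if j = 0 then real b ^ (m + 1) else 0) + LL b d (\<lambda>j m. \<Sum>r. gg b d j m r) j m"
    using Bp assms by (simp add: distrib_left)
  then show ?thesis using G by simp
qed

lemma rec_unique:
  assumes "b \<ge> 2" "d < b"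
    and X: "\<forall>j m. real b ^ (m + 1) * X j m = (if j = 0 then real b ^ (m + 1) else 0) + LL b d X j m"
  shows "X j m = vv b d j m"
proof (induction j arbitrary: m)
  case 0
  show ?case
  proof (induction m rule: less_induct)
    case (less m)
    have e: "(\<Sum>i\<in>{1..m}. real (m choose i) * gamma' b d i * X 0 (m - i))
        = (\<Sum>i\<in>{1..m}. real (m choose i) * gamma' b d i * vv b d 0 (m - i))"
      using less.IH by (intro sum.cong refl) auto
    have "(real b ^ (m + 1) - real b + 1) * X 0 m = (real b ^ (m + 1) - real b + 1) * vv b d 0 m"
      using X[rule_format, of m 0] vv_rec[OF assms(1,2), of m 0] e by (simp add: LL_split[OF assms(2)] algebra_simps)
    then show ?case using Bm_pos[OF assms(1), of m] by simp
  qed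
next
  case (Suc j)
  show ?case
  proof (induction m rule: less_induct)
    case (less m)
    have e: "(\<Sum>i\<in>{1..m}. real (m choose i) * gamma' b d i * X (Suc j) (m - i))
        = (\<Sum>i\<in>{1..m}. real (m choose i) * gamma' b d i * vv b d (Suc j) (m - i))"
      using less.IH by (intro sum.cong refl) auto
    have e2: "(\<Sum>i\<le>m. real (m choose i) * real (b - 1 - d) ^ i * X j (m - i))
        = (\<Sum>i\<le>m. real (m choose i) * real (b - 1 - d) ^ i * vv b d j (m - i))"
      using Suc.IH by simp
    have "(real b ^ (m + 1) - real b + 1) * X (Suc j) m = (real b ^ (m + 1) - real b + 1) * vv b d (Suc j) m"
      using X[rule_format, of m "Suc j"] vv_rec[OF assms(1,2), of m "Suc j"] e e2 by (simp add: LL_split[OF assms(2)] algebra_simps)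
    then show ?case using Bm_pos[OF assms(1), of m] by simp
  qed
qed

lemma vv_moment:
  assumes "b \<ge> 2" "d < b"
  shows "summable (gg b d j m) \<and> (\<Sum>r. gg b d j m r) = vv b d j m"
proof -
  have "\<forall>j m. real b ^ (m + 1) * (\<Sum>r. gg b d j m r) = (if j = 0 then real b ^ (m + 1) else 0)
          + LL b d (\<lambda>j m. \<Sum>r. gg b d j m r) j m"
    using suminf_gg_rec[OF assms] by blast
  from rec_unique[OF assms this] show ?thesis using gg_summable[OF assms] by blast
qed


lemma vv_m0: "vv b d j 0 = real b"
proof (induction j)
  case 0 show ?case by (subst vv.simps) simp
next
  case (Suc j) show ?case by (subst vv.simps) (simp add: Suc)
qed

lemma gg_mono_m:
  assumes "m \<le> m'"
  shows "gg b d j m' r \<le> gg b d j m r"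
  unfolding gg_def
proof (intro sum_mono)
  fix x assume "x \<in> {..<b ^ r}"
  then have "real x \<le> real (b ^ r)" by simp
  then have u: "real x / real b ^ r \<le> 1" "real x / real b ^ r \<ge> 0"
    by (cases "b = 0"; auto simp: divide_le_eq_1)+
  then have "(1 - real x / real b ^ r) ^ m' \<le> (1 - real x / real b ^ r) ^ m"
    using assms by (intro power_decreasing) auto
  then show "(if cnt b d r x = j then (1 - real x / real b ^ r) ^ m' / real b ^ r else 0)
       \<le> (if cnt b d r x = j then (1 - real x / real b ^ r) ^ m / real b ^ r else 0)"
    by (auto intro: divide_right_mono)
qed

lemma vv_le_b:
  assumes "b \<ge> 2" "d < b"
  shows "vv b d j m \<le> real b"
proof -
  have "(\<Sum>r. gg b d j m r) \<le> (\<Sum>r. gg b d j 0 r)"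
    using vv_moment[OF assms] gg_mono_m[of 0 m] by (intro suminf_le) auto
  then show ?thesis using vv_moment[OF assms] vv_m0[of b d j] by simp
qed

fun rep :: "nat \<Rightarrow> nat \<Rightarrow> nat \<Rightarrow> nat" where
  "rep b d 0 = 0"
| "rep b d (Suc j) = d * b ^ j + rep b d j"

lemma rep_props:
  assumes "b \<ge> 2" "d < b"
  shows "rep b d j < b ^ j \<and> cnt b d j (rep b d j) = j"
proof (induction j)
  case 0 then show ?case by simp
next
  case (Suc j)
  have "rep b d (Suc j) < b ^ Suc j"
  proof -
    have "d * b ^ j + rep b d j < d * b ^ j + b ^ j" using Suc by simp
    also have "\<dots> = (d + 1) * b ^ j" by simp
    also have "\<dots> \<le> b * b ^ j" using assms by (intro mult_right_mono) auto
    finally show ?thesis by simp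
  qed
  moreover have "cnt b d (Suc j) (rep b d (Suc j)) = Suc j"
    using cnt_lead[OF assms(1) assms(2), of "rep b d j" j] Suc by simp
  ultimately show ?case by simp
qed

lemma cnt_zero0: "cnt b 0 j 0 = j"
  by (induction j) auto

lemma witness:
  assumes "b \<ge> 2" "d < b" "j > 0 \<or> \<not> (b = 2 \<and> d = 1)"
  shows "\<exists>r s. s < b ^ r \<and> 0 < s \<and> cnt b d r s = j"
proof (cases "j = 0")
  case True
  define a where "a = (if d = 1 then 2 else 1 :: nat)"
  have "a < b" using assms True unfolding a_def by auto
  moreover have "a \<noteq> d" unfolding a_def by auto
  ultimately show ?thesis using True
    by (intro exI[of _ 1] exI[of _ a]) (auto simp: a_def)
next
  case False
  show ?thesis
  proof (cases "d = 0")
    case True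
    have "cnt b d (Suc j) (1 * b ^ j + 0) = j"
      using cnt_lead[OF assms(1), of 1 0 j d] assms True by (simp add: cnt_zero0)
    moreover have "b ^ j < b ^ Suc j" using assms by simp
    ultimately show ?thesis using assms
      by (intro exI[of _ "Suc j"] exI[of _ "b ^ j"]) auto
  next
    case d: False
    obtain j' where j': "j = Suc j'" using False by (cases j) auto
    have "rep b d j > 0" using d j' assms by simp
    then show ?thesis using rep_props[OF assms(1,2), of j] by blast
  qed
qed

lemma gg_strict_m:
  assumes "b \<ge> 2" "d < b" "m < m'" "s0 < b ^ r" "0 < s0" "cnt b d r s0 = j"
  shows "gg b d j m' r < gg b d j m r"
  unfolding gg_def
proof (rule sum_strict_mono_ex1)
  have Bp: "real b ^ r > 0" using assms by simp
  have u: "real x / real b ^ r \<le> 1" "real x / real b ^ r \<ge> 0" if "x < b ^ r" for x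
  proof -
    have "real x \<le> real (b ^ r)" using that by simp
    then show "real x / real b ^ r \<le> 1" "real x / real b ^ r \<ge> 0" using Bp by (auto simp: divide_le_eq_1)
  qed
  show "\<forall>x\<in>{..<b ^ r}. (if cnt b d r x = j then (1 - real x / real b ^ r) ^ m' / real b ^ r else 0)
       \<le> (if cnt b d r x = j then (1 - real x / real b ^ r) ^ m / real b ^ r else 0)"
  proof
    fix x assume "x \<in> {..<b ^ r}"
    then have "(1 - real x / real b ^ r) ^ m' \<le> (1 - real x / real b ^ r) ^ m"
      using u[of x] assms by (intro power_decreasing) auto
    then show "(if cnt b d r x = j then (1 - real x / real b ^ r) ^ m' / real b ^ r else 0)
       \<le> (if cnt b d r x = j then (1 - real x / real b ^ r) ^ m / real b ^ r else 0)"
      by (auto intro: divide_right_mono)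
  qed
  have lt: "real s0 < real b ^ r" using assms(4) by (simp flip: of_nat_power)
  have "(1 - real s0 / real b ^ r) ^ m' < (1 - real s0 / real b ^ r) ^ m"
    using assms lt Bp by (intro power_strict_decreasing) (auto simp: field_simps)
  then show "\<exists>a\<in>{..<b ^ r}. (if cnt b d r a = j then (1 - real a / real b ^ r) ^ m' / real b ^ r else 0)
       < (if cnt b d r a = j then (1 - real a / real b ^ r) ^ m / real b ^ r else 0)"
    using assms Bp by (intro bexI[of _ s0]) (auto intro: divide_strict_right_mono)
qed simp

lemma suminf_strict:
  fixes f g :: "nat \<Rightarrow> real"
  assumes "summable f" "summable g" "\<And>n. f n \<le> g n" "f i < g i"
  shows "suminf f < suminf g"
proof -
  have "0 < (\<Sum>n. g n - f n)"
    using assms by (intro suminf_pos2[where i=i]) (auto intro: summable_diff)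
  also have "(\<Sum>n. g n - f n) = suminf g - suminf f" using suminf_diff[OF assms(2) assms(1)] by simp
  finally show ?thesis by simp
qed

lemma vv_strict_m:
  assumes "b \<ge> 2" "d < b" "\<not> (b = 2 \<and> d = 1 \<and> j = 0)" "m < m'"
  shows "vv b d j m' < vv b d j m"
proof -
  have "j > 0 \<or> \<not> (b = 2 \<and> d = 1)" using assms(3) by auto
  then obtain r s where w: "s < b ^ r" "0 < s" "cnt b d r s = j"
    using witness[OF assms(1,2)] by blast
  have s1: "summable (gg b d j m')" and s2: "summable (gg b d j m)"
    using vv_moment[OF assms(1,2)] by blast+
  have le: "\<And>n. gg b d j m' n \<le> gg b d j m n" using gg_mono_m[of m m'] assms(4) by simp
  have lt: "gg b d j m' r < gg b d j m r" by (rule gg_strict_m[OF assms(1,2,4) w])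
  have "suminf (gg b d j m') < suminf (gg b d j m)" by (rule suminf_strict[OF s1 s2 le lt])
  moreover have "suminf (gg b d j m') = vv b d j m'" "suminf (gg b d j m) = vv b d j m"
    using vv_moment[OF assms(1,2)] by blast+
  ultimately show ?thesis by simp
qed

lemma vv_exc: "vv 2 1 0 m = 2"
proof (induction m rule: less_induct)
  case (less m)
  have g: "gamma' 2 1 i = 1" for i
  proof -
    have "{a. a < (2::nat) \<and> a \<noteq> 2 - 1 - 1} = {1}" by auto
    then show ?thesis unfolding gamma'_def by simp
  qed
  have g': "gamma' 2 (Suc 0) i = 1" for i using g[of i] by simp
  have e: "(\<Sum>i\<in>{1..m}. real (m choose i) * gamma' 2 1 i * vv 2 1 0 (m - i)) = 2 * (\<Sum>i\<in>{1..m}. real (m choose i))"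
    using less.IH by (simp add: g g' sum_distrib_left mult.commute)
  have "(\<Sum>i\<le>m. real (m choose i)) = 2 ^ m"
  proof -
    have "(\<Sum>i\<le>m. real (m choose i)) = real (\<Sum>i\<le>m. m choose i)" by simp
    also have "\<dots> = 2 ^ m" by (simp only: choose_row_sum) simp
    finally show ?thesis .
  qed
  then have e2: "(\<Sum>i\<in>{1..m}. real (m choose i)) = 2 ^ m - 1"
    using sum_atMost_split0[of "\<lambda>i. real (m choose i)" m] by simp
  have pos: "(2::real) ^ (m + 1) - 2 + 1 > 0" using Bm_pos[of 2 m] by simp
  have "vv 2 1 0 m = (real 2 ^ (m + 1) + 2 * (2 ^ m - 1)) / (real 2 ^ (m + 1) - real 2 + 1)"
    unfolding vv.simps(1)[of 2 1 m] e e2 ..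
  also have "\<dots> = 2" using pos by (simp add: field_simps)
  finally show ?case .
qed


lemma vv_rec2:
  assumes "b \<ge> 2" "d < b"
  shows "(real b ^ (m + 1) - real b + 1) * vv b d j m = (if j = 0 then real b ^ (m + 1) else 0)
     + (\<Sum>i\<in>{1..m}. real (m choose i) * gamma' b d i * vv b d j (m - i))
     + (if j > 0 then (\<Sum>i\<le>m. real (m choose i) * real (b - 1 - d) ^ i * vv b d (j - 1) (m - i)) else 0)"
  using vv_rec[OF assms, of m j] by (simp add: LL_split[OF assms(2)] algebra_simps)

lemma E0_bound:
  assumes "b \<ge> 2" "d < b" "m \<ge> 1"
  shows "(\<Sum>i\<le>m. real (m choose i) * real (b - 1 - d) ^ i * vv b d 0 (m - i)) < real b ^ (m + 1)"
proof -
  let ?dp = "real (b - 1 - d)"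
  have bin: "(\<Sum>i\<le>m. real (m choose i) * ?dp ^ i) = (?dp + 1) ^ m"
    using binomial_ring[of ?dp 1 m] by simp
  have "(\<Sum>i\<le>m. real (m choose i) * ?dp ^ i * vv b d 0 (m - i))
      = vv b d 0 m + (\<Sum>i\<in>{1..m}. real (m choose i) * ?dp ^ i * vv b d 0 (m - i))"
    using sum_atMost_split0[of "\<lambda>i. real (m choose i) * ?dp ^ i * vv b d 0 (m - i)" m] by simp
  also have "(\<Sum>i\<in>{1..m}. real (m choose i) * ?dp ^ i * vv b d 0 (m - i))
      \<le> (\<Sum>i\<in>{1..m}. real (m choose i) * ?dp ^ i * real b)"
    using vv_le_b[OF assms(1,2)] by (intro sum_mono mult_left_mono) auto
  also have "\<dots> = (\<Sum>i\<in>{1..m}. real (m choose i) * ?dp ^ i) * real b"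
    by (rule sum_distrib_right[symmetric])
  also have "(\<Sum>i\<in>{1..m}. real (m choose i) * ?dp ^ i) = (?dp + 1) ^ m - 1"
    using bin sum_atMost_split0[of "\<lambda>i. real (m choose i) * ?dp ^ i" m] by simp
  also have "((?dp + 1) ^ m - 1) * real b = real b * ((?dp + 1) ^ m - 1)" by (rule mult.commute)
  finally have le: "(\<Sum>i\<le>m. real (m choose i) * ?dp ^ i * vv b d 0 (m - i)) \<le> vv b d 0 m + real b * ((?dp + 1) ^ m - 1)"
    by simp
  have bm: "real b * real b ^ m = real b ^ (m + 1)" by simp
  show ?thesis
  proof (cases "b = 2 \<and> d = 1")
    case True
    have t2: "(2::real) ^ 1 < 2 ^ (m + 1)" using assms(3) by (intro power_strict_increasing) auto
    have b2: "b = 2" and d1: "d = 1" using True by auto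
    have "vv b d 0 m = 2" unfolding b2 d1 by (rule vv_exc)
    moreover have "real (b - 1 - d) = 0" unfolding b2 d1 by simp
    ultimately have "(\<Sum>i\<le>m. real (m choose i) * ?dp ^ i * vv b d 0 (m - i)) \<le> 2"
      using le by simp
    also have "(2::real) < real b ^ (m + 1)" using t2 b2 by simp
    finally show ?thesis .
  next
    case False
    have nf: "\<not> (b = 2 \<and> d = 1 \<and> (0::nat) = 0)" using False by simp
    have "0 < m" using assms(3) by simp
    from vv_strict_m[OF assms(1,2) nf this] have "vv b d 0 m < vv b d 0 0" .
    then have w: "vv b d 0 m < real b" by (simp add: vv_m0)
    have n1: "b - 1 - d + 1 \<le> b" using assms by arith
    have "real (b - 1 - d + 1) \<le> real b" using n1 by (simp only: of_nat_le_iff)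
    then have dpb: "?dp + 1 \<le> real b" by simp
    have "(?dp + 1) ^ m \<le> real b ^ m" by (rule power_mono[OF dpb]) simp
    then have x1: "real b * ((?dp + 1) ^ m - 1) \<le> real b * (real b ^ m - 1)"
      by (intro mult_left_mono) simp_all
    have x2: "real b * (real b ^ m - 1) = real b ^ (m + 1) - real b" by (simp add: algebra_simps)
    show ?thesis using le w x1 x2 by linarith
  qed
qed

lemma vv_dec_j_aux:
  assumes "b \<ge> 2" "d < b"
  shows "vv b d (Suc j) m \<le> vv b d j m \<and> (m \<ge> 1 \<longrightarrow> vv b d (Suc j) m < vv b d j m)"
proof (induction j arbitrary: m)
  case 0
  show ?case
  proof (induction m rule: less_induct)
    case (less m)
    show ?case
    proof (cases "m = 0")
      case True then show ?thesis by (simp add: vv_m0)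
    next
      case False
      have A: "(\<Sum>i\<in>{1..m}. real (m choose i) * gamma' b d i * vv b d 1 (m - i))
          \<le> (\<Sum>i\<in>{1..m}. real (m choose i) * gamma' b d i * vv b d 0 (m - i))"
        using less.IH by (intro sum_mono mult_left_mono) (auto intro!: mult_nonneg_nonneg gamma'_nonneg)
      have "(real b ^ (m + 1) - real b + 1) * vv b d 1 m < (real b ^ (m + 1) - real b + 1) * vv b d 0 m"
        using vv_rec2[OF assms, of m 0] vv_rec2[OF assms, of m 1] A E0_bound[OF assms, of m] False by simp
      then show ?thesis using Bm_pos[OF assms(1), of m] by (simp add: mult_less_cancel_left)
    qed
  qed
next
  case (Suc j)
  show ?case
  proof (induction m rule: less_induct)
    case (less m)
    show ?case
    proof (cases "m = 0")
      case True then show ?thesis by (simp add: vv_m0)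
    next
      case False
      have A: "(\<Sum>i\<in>{1..m}. real (m choose i) * gamma' b d i * vv b d (Suc (Suc j)) (m - i))
          \<le> (\<Sum>i\<in>{1..m}. real (m choose i) * gamma' b d i * vv b d (Suc j) (m - i))"
        using less.IH by (intro sum_mono mult_left_mono) (auto intro!: mult_nonneg_nonneg gamma'_nonneg)
      have E: "(\<Sum>i\<le>m. real (m choose i) * real (b - 1 - d) ^ i * vv b d (Suc j) (m - i))
          < (\<Sum>i\<le>m. real (m choose i) * real (b - 1 - d) ^ i * vv b d j (m - i))"
      proof (rule sum_strict_mono_ex1)
        show "\<forall>x\<in>{..m}. real (m choose x) * real (b - 1 - d) ^ x * vv b d (Suc j) (m - x)
            \<le> real (m choose x) * real (b - 1 - d) ^ x * vv b d j (m - x)"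
          using Suc.IH by (auto intro!: mult_left_mono)
        show "\<exists>a\<in>{..m}. real (m choose a) * real (b - 1 - d) ^ a * vv b d (Suc j) (m - a)
            < real (m choose a) * real (b - 1 - d) ^ a * vv b d j (m - a)"
          using Suc.IH[of m] False by (intro bexI[of _ 0]) auto
      qed simp
      have "(real b ^ (m + 1) - real b + 1) * vv b d (Suc (Suc j)) m < (real b ^ (m + 1) - real b + 1) * vv b d (Suc j) m"
        using vv_rec2[OF assms, of m "Suc j"] vv_rec2[OF assms, of m "Suc (Suc j)"] A E by simp
      then show ?thesis using Bm_pos[OF assms(1), of m] by (simp add: mult_less_cancel_left)
    qed
  qed
qed

lemma vv_dec_j:
  assumes "b \<ge> 2" "d < b" "m \<ge> 1" "j < j'"
  shows "vv b d j' m < vv b d j m"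
  using assms(4)
proof (induction j')
  case 0 then show ?case by simp
next
  case (Suc j')
  have s: "vv b d (Suc j') m < vv b d j' m" using vv_dec_j_aux[OF assms(1,2)] assms(3) by blast
  show ?case
  proof (cases "j = j'")
    case True then show ?thesis using s by simp
  next
    case False then have "j < j'" using Suc.prems by simp
    then show ?thesis using Suc.IH s by simp
  qed
qed

lemma P_sum: "d < b \<Longrightarrow> gamma' b d i + real (b - 1 - d) ^ i = (\<Sum>a<b. real a ^ i)"
proof -
  assume db: "d < b"
  have "(\<Sum>a<b. real a ^ i) = real (b - 1 - d) ^ i + (\<Sum>a\<in>{..<b} - {b - 1 - d}. real a ^ i)"
    using db by (intro sum.remove) auto
  moreover have "{..<b} - {b - 1 - d} = {a. a < b \<and> a \<noteq> b - 1 - d}" by auto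
  ultimately show ?thesis unfolding gamma'_def by simp
qed

lemma frac_aux:
  fixes y z c c' P :: real
  assumes h: "y * c' = z * c" and "y \<noteq> 0" "z \<noteq> 0"
  shows "c * P / y = c' * P / z"
proof -
  have "c * P * z = P * (z * c)" by (simp only: ac_simps)
  also have "\<dots> = P * (y * c')" by (simp only: h)
  also have "\<dots> = c' * P * y" by (simp only: ac_simps)
  finally have e: "c * P * z = c' * P * y" .
  show ?thesis using e assms(2,3) by (simp add: frac_eq_eq)
qed

lemma aux2:
  fixes C g p B y :: real
  assumes "y \<noteq> 0"
  shows "C * g * (B / y) + C * p * (B / y) = B * (C * (g + p) / y)"
  using assms by (simp add: field_simps)

lemma P_identity:
  fixes m :: nat
  shows "(\<Sum>i\<in>{1..m}. real (m choose i) * (\<Sum>a<b. real a ^ i) / real (m - i + 1))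
       = (real b ^ (m + 1) - real b) / real (m + 1)"
proof -
  let ?P = "\<lambda>i. (\<Sum>a<b. real a ^ i)"
  have full: "(\<Sum>i\<le>m. real (Suc m choose i) * ?P i) = real b ^ (m + 1)"
  proof -
    have "(\<Sum>i\<le>m. real (Suc m choose i) * ?P i) = (\<Sum>a<b. \<Sum>i\<le>m. real (Suc m choose i) * real a ^ i)"
      by (simp add: sum_distrib_left sum.swap[of _ "{..m}"])
    also have "\<dots> = (\<Sum>a<b. real (Suc a) ^ Suc m - real a ^ Suc m)"
    proof (rule sum.cong[OF refl])
      fix a
      have "(real a + 1) ^ Suc m = (\<Sum>i\<le>Suc m. real (Suc m choose i) * real a ^ i)"
        using binomial_ring[of "real a" 1 "Suc m"] by simp
      then show "(\<Sum>i\<le>m. real (Suc m choose i) * real a ^ i) = real (Suc a) ^ Suc m - real a ^ Suc m"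
        by (simp add: add.commute)
    qed
    also have "\<dots> = real b ^ (m + 1)"
      using sum_lessThan_telescope[of "\<lambda>a. real a ^ Suc m" b] by simp
    finally show ?thesis .
  qed
  have P0: "?P 0 = real b" by simp
  have part: "(\<Sum>i\<in>{1..m}. real (Suc m choose i) * ?P i) = real b ^ (m + 1) - real b"
    using full sum_atMost_split0[of "\<lambda>i. real (Suc m choose i) * ?P i" m] P0 by simp
  have "(\<Sum>i\<in>{1..m}. real (m choose i) * ?P i / real (m - i + 1))
      = (\<Sum>i\<in>{1..m}. real (Suc m choose i) * ?P i / real (m + 1))"
  proof (rule sum.cong[OF refl])
    fix i assume i: "i \<in> {1..m}"
    have n: "(Suc m - i) * (Suc m choose i) = Suc m * (m choose i)"
      using binomial_absorb_comp[of "Suc m" i] by simp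
    have "Suc m - i = m - i + 1" using i by auto
    then have n2: "(m - i + 1) * (Suc m choose i) = (m + 1) * (m choose i)" using n by simp
    have "real (m - i + 1) * real (Suc m choose i) = real (m + 1) * real (m choose i)"
      using arg_cong[OF n2, of real] by (simp only: of_nat_mult)
    then show "real (m choose i) * ?P i / real (m - i + 1) = real (Suc m choose i) * ?P i / real (m + 1)"
      by (rule frac_aux) simp_all
  qed
  also have "\<dots> = (real b ^ (m + 1) - real b) / real (m + 1)"
    using part by (simp add: sum_divide_distrib[symmetric])
  finally show ?thesis .
qed

lemma vv_lim:
  assumes "b \<ge> 2" "d < b"
  shows "(\<lambda>j. vv b d j m) \<longlonglongrightarrow> real b / real (m + 1)"
proof (induction m rule: less_induct)
  case (less m)
  show ?case
  proof (cases "m = 0")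
    case True then show ?thesis by (simp add: vv_m0)
  next
    case False
    have dec: "decseq (\<lambda>j. vv b d j m)"
      using vv_dec_j_aux[OF assms] by (intro decseq_SucI) blast
    have lb: "\<forall>i. 0 \<le> vv b d i m" using vv_pos[OF assms] by (simp add: less_imp_le)
    obtain L where L: "(\<lambda>j. vv b d j m) \<longlonglongrightarrow> L"
      using decseq_convergent[OF dec lb] by blast
    define Bm where "Bm = real b ^ (m + 1) - real b + 1"
    define f where "f j = (\<Sum>i\<in>{1..m}. real (m choose i) * gamma' b d i * vv b d (Suc j) (m - i))
        + (vv b d j m + (\<Sum>i\<in>{1..m}. real (m choose i) * real (b - 1 - d) ^ i * vv b d j (m - i)))" for j
    have eq: "Bm * vv b d (Suc j) m = f j" for j
      using vv_rec2[OF assms, of m "Suc j"]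
        sum_atMost_split0[of "\<lambda>i. real (m choose i) * real (b - 1 - d) ^ i * vv b d j (m - i)" m]
      unfolding Bm_def f_def by simp
    have IH1: "(\<lambda>j. vv b d (Suc j) (m - i)) \<longlonglongrightarrow> real b / real (m - i + 1)" if "i \<in> {1..m}" for i
      using LIMSEQ_Suc[OF less.IH[of "m - i"]] that False by auto
    have IH2: "(\<lambda>j. vv b d j (m - i)) \<longlonglongrightarrow> real b / real (m - i + 1)" if "i \<in> {1..m}" for i
      using less.IH[of "m - i"] that False by auto
    have "f \<longlonglongrightarrow> (\<Sum>i\<in>{1..m}. real (m choose i) * gamma' b d i * (real b / real (m - i + 1)))
        + (L + (\<Sum>i\<in>{1..m}. real (m choose i) * real (b - 1 - d) ^ i * (real b / real (m - i + 1))))"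
      unfolding f_def by (intro tendsto_add tendsto_sum tendsto_mult tendsto_const IH1 IH2 L)
    moreover have "f \<longlonglongrightarrow> Bm * L"
    proof -
      have "(\<lambda>j. Bm * vv b d (Suc j) m) \<longlonglongrightarrow> Bm * L" by (intro tendsto_mult_left LIMSEQ_Suc[OF L])
      moreover have "f = (\<lambda>j. Bm * vv b d (Suc j) m)" using eq by auto
      ultimately show ?thesis by simp
    qed
    ultimately have LE: "Bm * L = (\<Sum>i\<in>{1..m}. real (m choose i) * gamma' b d i * (real b / real (m - i + 1)))
        + (L + (\<Sum>i\<in>{1..m}. real (m choose i) * real (b - 1 - d) ^ i * (real b / real (m - i + 1))))"
      using LIMSEQ_unique by blast
    have "(\<Sum>i\<in>{1..m}. real (m choose i) * gamma' b d i * (real b / real (m - i + 1)))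
        + (\<Sum>i\<in>{1..m}. real (m choose i) * real (b - 1 - d) ^ i * (real b / real (m - i + 1)))
        = real b * (\<Sum>i\<in>{1..m}. real (m choose i) * (\<Sum>a<b. real a ^ i) / real (m - i + 1))"
    proof -
      have "(\<Sum>i\<in>{1..m}. real (m choose i) * gamma' b d i * (real b / real (m - i + 1)))
        + (\<Sum>i\<in>{1..m}. real (m choose i) * real (b - 1 - d) ^ i * (real b / real (m - i + 1)))
        = (\<Sum>i\<in>{1..m}. real (m choose i) * gamma' b d i * (real b / real (m - i + 1))
          + real (m choose i) * real (b - 1 - d) ^ i * (real b / real (m - i + 1)))"
        by (rule sum.distrib[symmetric])
      also have "\<dots> = (\<Sum>i\<in>{1..m}. real b * (real (m choose i) * (\<Sum>a<b. real a ^ i) / real (m - i + 1)))"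
      proof (rule sum.cong[OF refl])
        fix i
        show "real (m choose i) * gamma' b d i * (real b / real (m - i + 1))
            + real (m choose i) * real (b - 1 - d) ^ i * (real b / real (m - i + 1))
            = real b * (real (m choose i) * (\<Sum>a<b. real a ^ i) / real (m - i + 1))"
          unfolding P_sum[OF assms(2), symmetric] by (rule aux2) simp
      qed
      also have "\<dots> = real b * (\<Sum>i\<in>{1..m}. real (m choose i) * (\<Sum>a<b. real a ^ i) / real (m - i + 1))"
        by (rule sum_distrib_left[symmetric])
      finally show ?thesis .
    qed
    also have "\<dots> = real b * ((real b ^ (m + 1) - real b) / real (m + 1))"
      by (simp only: P_identity)
    finally have eqS: "(\<Sum>i\<in>{1..m}. real (m choose i) * gamma' b d i * (real b / real (m - i + 1)))
        + (\<Sum>i\<in>{1..m}. real (m choose i) * real (b - 1 - d) ^ i * (real b / real (m - i + 1)))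
        = real b * ((real b ^ (m + 1) - real b) / real (m + 1))" .
    have "(real b ^ (m + 1) - real b) * L = Bm * L - L" unfolding Bm_def by (simp add: algebra_simps)
    also have "\<dots> = (\<Sum>i\<in>{1..m}. real (m choose i) * gamma' b d i * (real b / real (m - i + 1)))
        + (\<Sum>i\<in>{1..m}. real (m choose i) * real (b - 1 - d) ^ i * (real b / real (m - i + 1)))"
      using LE by linarith
    also have "\<dots> = real b * ((real b ^ (m + 1) - real b) / real (m + 1))" by (rule eqS)
    also have "\<dots> = (real b ^ (m + 1) - real b) * (real b / real (m + 1))" by simp
    finally have eqL: "(real b ^ (m + 1) - real b) * L = (real b ^ (m + 1) - real b) * (real b / real (m + 1))" .
    moreover have "real b ^ (m + 1) - real b > 0"
    proof -
      have "real b ^ 1 < real b ^ (m + 1)" using assms False by (intro power_strict_increasing) auto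
      then show ?thesis by simp
    qed
    then have nz: "real b ^ (m + 1) - real b \<noteq> 0" by linarith
    have "L = real b / real (m + 1)" using eqL unfolding mult_left_cancel[OF nz] .
    then show ?thesis using L by simp
  qed
qed


lemma fub:
  fixes f :: "'a \<times> 'b \<Rightarrow> real"
  assumes f: "\<And>x. x \<in> A \<Longrightarrow> ((\<lambda>y. f (x, y)) has_sum g x) (B x)"
    and g: "(g has_sum S) A"
    and nn: "\<And>x y. x \<in> A \<Longrightarrow> y \<in> B x \<Longrightarrow> f (x, y) \<ge> 0"
  shows "(f has_sum S) (Sigma A B)"
proof (rule has_sum_SigmaI[OF f g])
  show "f summable_on Sigma A B"
    by (rule summable_on_SigmaI[OF f]) (use g nn has_sum_imp_summable in auto)
qed auto

lemma geom_expand: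
  fixes x u :: real
  assumes "x \<ge> 1" "0 \<le> u" "u < 1"
  shows "((\<lambda>m. (1 - u) ^ m / (x + 1) ^ (m + 1)) has_sum 1 / (x + u)) UNIV"
proof -
  define q where "q = (1 - u) / (x + 1)"
  have q: "0 \<le> q" "q < 1" using assms unfolding q_def by (auto simp: field_simps)
  have "(\<lambda>m. q ^ m) sums (1 / (1 - q))" using q by (intro geometric_sums) auto
  then have "(\<lambda>m. q ^ m * (1 / (x + 1))) sums (1 / (1 - q) * (1 / (x + 1)))"
    by (rule sums_mult2)
  moreover have "1 / (1 - q) * (1 / (x + 1)) = 1 / (x + u)"
    using assms unfolding q_def by (simp add: field_simps)
  moreover have "q ^ m * (1 / (x + 1)) = (1 - u) ^ m / (x + 1) ^ (m + 1)" for m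
    unfolding q_def by (simp add: power_divide)
  ultimately have "(\<lambda>m. (1 - u) ^ m / (x + 1) ^ (m + 1)) sums (1 / (x + u))" by simp
  then show ?thesis
    using assms by (intro sums_nonneg_imp_has_sum) auto
qed

definition PP :: "nat \<Rightarrow> nat \<Rightarrow> nat \<Rightarrow> (nat \<times> nat) set" where
  "PP b d j = Sigma UNIV (\<lambda>r. {s. s < b ^ r \<and> cnt b d r s = j})"

lemma moment_has_sum:
  assumes "b \<ge> 2" "d < b"
  shows "((\<lambda>(r, s). (1 - real s / real b ^ r) ^ m / real b ^ r) has_sum vv b d j m) (PP b d j)"
  unfolding PP_def
proof (rule fub)
  fix r :: nat
  have fin: "finite {s. s < b ^ r \<and> cnt b d r s = j}" by simp
  have "(\<Sum>s\<in>{s. s < b ^ r \<and> cnt b d r s = j}. (1 - real s / real b ^ r) ^ m / real b ^ r) = gg b d j m r"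
  proof -
    have "(\<Sum>s\<in>{s. s < b ^ r \<and> cnt b d r s = j}. (1 - real s / real b ^ r) ^ m / real b ^ r)
        = (\<Sum>s\<in>{s\<in>{..<b^r}. cnt b d r s = j}. (1 - real s / real b ^ r) ^ m / real b ^ r)"
      by (rule sum.cong) auto
    also have "\<dots> = gg b d j m r" unfolding gg_def by (rule sum.inter_filter) simp
    finally show ?thesis .
  qed
  then show "((\<lambda>s. case (r, s) of (r, s) \<Rightarrow> (1 - real s / real b ^ r) ^ m / real b ^ r) has_sum gg b d j m r)
        {s. s < b ^ r \<and> cnt b d r s = j}"
    using fin by (simp add: has_sum_finiteI)
next
  show "(gg b d j m has_sum vv b d j m) UNIV"
  proof -
    have "gg b d j m sums vv b d j m" using vv_moment[OF assms, of j m] by (simp add: sums_iff)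
    then show ?thesis by (rule sums_nonneg_imp_has_sum) (rule gg_nonneg)
  qed
next
  fix r s assume "s \<in> {s. s < b ^ r \<and> cnt b d r s = j}"
  then have "real s \<le> real (b ^ r)" by simp
  then have "real s / real b ^ r \<le> 1" using assms by (auto simp: divide_le_eq_1)
  then show "0 \<le> (case (r, s) of (r, s) \<Rightarrow> (1 - real s / real b ^ r) ^ m / real b ^ r)" by simp
qed

lemma V_summable:
  assumes "b \<ge> 2" "d < b" "n \<ge> 1"
  shows "summable (\<lambda>m. vv b d j m / real (n + 1) ^ (m + 1))"
proof (rule summable_comparison_test')
  show "summable (\<lambda>m. real b * (1 / real (n + 1)) ^ (m + 1))"
    using assms by (intro summable_mult summable_ignore_initial_segment[where k=1, simplified] summable_geometric) auto
next
  fix m :: nat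
  have "vv b d j m / real (n + 1) ^ (m + 1) \<le> real b / real (n + 1) ^ (m + 1)"
    using vv_le_b[OF assms(1,2)] by (intro divide_right_mono) auto
  then show "norm (vv b d j m / real (n + 1) ^ (m + 1)) \<le> real b * (1 / real (n + 1)) ^ (m + 1)"
    using vv_pos[OF assms(1,2), of j m] by (simp add: power_divide)
qed

lemma block_has_sum:
  assumes "b \<ge> 2" "d < b" "n \<ge> 1"
  shows "((\<lambda>(r, s). 1 / real (n * b ^ r + s)) has_sum (\<Sum>m. vv b d j m / real (n + 1) ^ (m + 1))) (PP b d j)"
proof -
  define h where "h = (\<lambda>(m::nat, (r::nat, s::nat)). (1 - real s / real b ^ r) ^ m / real b ^ r / real (n + 1) ^ (m + 1))"
  define Vs where "Vs = (\<Sum>m. vv b d j m / real (n + 1) ^ (m + 1))"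
  have Bp: "real b ^ r > 0" for r using assms by simp
  have u: "0 \<le> real s / real b ^ r" "real s / real b ^ r < 1" if "s < b ^ r" for r s
  proof -
    have "real s < real (b ^ r)" using that by simp
    then show "0 \<le> real s / real b ^ r" "real s / real b ^ r < 1" using Bp[of r] by (auto simp: divide_less_eq_1)
  qed
  have step1: "(h has_sum Vs) (Sigma UNIV (\<lambda>_. PP b d j))"
  proof (rule fub)
    fix m :: nat
    show "((\<lambda>y. h (m, y)) has_sum vv b d j m / real (n + 1) ^ (m + 1)) (PP b d j)"
      using has_sum_divide_const[OF moment_has_sum[OF assms(1,2), of m j], of "real (n + 1) ^ (m + 1)"]
      unfolding h_def by (simp add: case_prod_unfold)
  next
    show "((\<lambda>m. vv b d j m / real (n + 1) ^ (m + 1)) has_sum Vs) UNIV"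
      unfolding Vs_def using V_summable[OF assms] vv_pos[OF assms(1,2)]
      by (intro sums_nonneg_imp_has_sum) (auto intro: less_imp_le)
  next
    fix m :: nat and y assume "y \<in> PP b d j"
    then obtain r s where y: "y = (r, s)" "s < b ^ r" unfolding PP_def by auto
    show "0 \<le> h (m, y)" using u[OF y(2)] unfolding h_def y(1) by simp
  qed
  have step2: "((\<lambda>(x, y). h (y, x)) has_sum Vs) (PP b d j \<times> UNIV)"
    using step1 has_sum_swap[where f=h and S=Vs and A=UNIV and B="PP b d j"] by simp
  have step3: "((\<lambda>(r, s). 1 / real (n * b ^ r + s)) has_sum Vs) (PP b d j)"
  proof (rule has_sum_SigmaD[where f="\<lambda>(x, y). h (y, x)" and A="PP b d j" and B="\<lambda>_. UNIV"])
    show "((\<lambda>(x, y). h (y, x)) has_sum Vs) (Sigma (PP b d j) (\<lambda>_. UNIV))" using step2 by simp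
  next
    fix rs assume "rs \<in> PP b d j"
    then obtain r s where rs: "rs = (r, s)" "s < b ^ r" unfolding PP_def by auto
    have g: "((\<lambda>m. (1 - real s / real b ^ r) ^ m / real (n + 1) ^ (m + 1)) has_sum 1 / (real n + real s / real b ^ r)) UNIV"
    proof -
      have n1: "real n \<ge> 1" using assms(3) by simp
      have g0: "((\<lambda>m. (1 - real s / real b ^ r) ^ m / (real n + 1) ^ (m + 1)) has_sum 1 / (real n + real s / real b ^ r)) UNIV"
        by (rule geom_expand[OF n1 u[OF rs(2)]])
      then show ?thesis by (simp only: of_nat_add of_nat_1)
    qed
    have "((\<lambda>m. (1 - real s / real b ^ r) ^ m / real (n + 1) ^ (m + 1) / real b ^ r) has_sum
        1 / (real n + real s / real b ^ r) / real b ^ r) UNIV"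
      by (rule has_sum_divide_const[OF g])
    moreover have "1 / (real n + real s / real b ^ r) / real b ^ r = 1 / real (n * b ^ r + s)"
    proof -
      have B: "real b ^ r \<noteq> 0" using Bp[of r] by simp
      have e: "real n + real s / real b ^ r = (real n * real b ^ r + real s) / real b ^ r"
        using B by (simp add: add_divide_distrib)
      have "1 / (real n + real s / real b ^ r) / real b ^ r = 1 / (real n * real b ^ r + real s)"
        unfolding e using B by simp
      also have "real n * real b ^ r + real s = real (n * b ^ r + s)" by simp
      finally show ?thesis .
    qed
    ultimately show "((\<lambda>y. case (rs, y) of (x, y) \<Rightarrow> h (y, x)) has_sum (case rs of (r, s) \<Rightarrow> 1 / real (n * b ^ r + s))) UNIV"
      unfolding h_def rs(1) by (simp add: field_simps)
  qed
  then show ?thesis unfolding Vs_def .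
qed


lemma no_lt:
  fixes b l n n' r r' s s' :: nat
  assumes "b \<ge> 2" "l \<ge> 1" "n < b ^ l" "s < b ^ r" "b ^ (l - 1) \<le> n'" "r < r'"
  shows "n * b ^ r + s < n' * b ^ r' + s'"
proof -
  have "n * b ^ r + s < n * b ^ r + b ^ r" using assms by simp
  also have "\<dots> = (n + 1) * b ^ r" by simp
  also have "\<dots> \<le> b ^ l * b ^ r" using assms by (intro mult_right_mono) auto
  also have "\<dots> = b ^ (l + r)" by (simp add: power_add)
  also have "\<dots> \<le> b ^ (l - 1 + r')" using assms by (intro power_increasing) auto
  also have "\<dots> = b ^ (l - 1) * b ^ r'" by (simp add: power_add)
  also have "\<dots> \<le> n' * b ^ r'" using assms by (intro mult_right_mono) auto
  also have "\<dots> \<le> n' * b ^ r' + s'" by simp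
  finally show ?thesis .
qed

lemma decomp_bij:
  fixes b d k l :: nat
  assumes "b \<ge> 2" "d < b" "l \<ge> 1"
  defines "S \<equiv> {n. b ^ (l - 1) \<le> n \<and> n < b ^ l \<and> digit_count b d n \<le> k}"
  shows "bij_betw (\<lambda>(n, (r, s)). n * b ^ r + s) (Sigma S (\<lambda>n. PP b d (k - digit_count b d n)))
            {N. b ^ (l - 1) \<le> N \<and> digit_count b d N = k}"
proof (rule bij_betwI')
  fix x y
  assume x: "x \<in> Sigma S (\<lambda>n. PP b d (k - digit_count b d n))" and y: "y \<in> Sigma S (\<lambda>n. PP b d (k - digit_count b d n))"
  obtain n r s where xe: "x = (n, (r, s))" by (cases x) auto
  obtain n' r' s' where ye: "y = (n', (r', s'))" by (cases y) auto
  have h: "b ^ (l - 1) \<le> n" "n < b ^ l" "s < b ^ r" "b ^ (l - 1) \<le> n'" "n' < b ^ l" "s' < b ^ r'"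
    using x y unfolding xe ye S_def PP_def by auto
  show "((case x of (n, r, s) \<Rightarrow> n * b ^ r + s) = (case y of (n, r, s) \<Rightarrow> n * b ^ r + s)) = (x = y)"
  proof
    assume eq: "(case x of (n, r, s) \<Rightarrow> n * b ^ r + s) = (case y of (n, r, s) \<Rightarrow> n * b ^ r + s)"
    then have eq': "n * b ^ r + s = n' * b ^ r' + s'" unfolding xe ye by simp
    have "\<not> r < r'" using no_lt[OF assms(1,3) h(2,3,4), of r' s'] eq' by auto
    moreover have "\<not> r' < r" using no_lt[OF assms(1,3) h(5,6,1), of r s] eq' by auto
    ultimately have rr: "r = r'" by simp
    have bp: "b ^ r > 0" using assms by simp
    have "(n * b ^ r + s) div b ^ r = n" "(n * b ^ r + s) mod b ^ r = s" using h bp by auto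
    moreover have "(n' * b ^ r + s') div b ^ r = n'" "(n' * b ^ r + s') mod b ^ r = s'" using h bp rr by auto
    ultimately show "x = y" using eq' rr unfolding xe ye by simp
  qed simp
next
  fix x assume x: "x \<in> Sigma S (\<lambda>n. PP b d (k - digit_count b d n))"
  obtain n r s where xe: "x = (n, (r, s))" by (cases x) auto
  have h: "b ^ (l - 1) \<le> n" "n < b ^ l" "s < b ^ r" "digit_count b d n \<le> k" "cnt b d r s = k - digit_count b d n"
    using x unfolding xe S_def PP_def by auto
  have "b ^ (l - 1) > 0" using assms by simp
  then have np: "n > 0" using h(1) by linarith
  have "n \<le> n * b ^ r" using assms by simp
  then have "b ^ (l - 1) \<le> n * b ^ r + s" using h by linarith
  moreover have "digit_count b d (n * b ^ r + s) = k" using dc_split[OF assms(1) np h(3)] h by simp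
  ultimately show "(case x of (n, r, s) \<Rightarrow> n * b ^ r + s) \<in> {N. b ^ (l - 1) \<le> N \<and> digit_count b d N = k}"
    unfolding xe by simp
next
  fix N assume N: "N \<in> {N. b ^ (l - 1) \<le> N \<and> digit_count b d N = k}"
  obtain r where r: "b ^ (l - 1) \<le> N div b ^ r" "N div b ^ r < b ^ l"
    using exists_r[OF assms(1,3)] N by blast
  define n where "n = N div b ^ r"
  define s where "s = N mod b ^ r"
  have bp: "b ^ r > 0" using assms by simp
  have Ne: "N = n * b ^ r + s" unfolding n_def s_def by (rule div_mult_mod_eq[symmetric])
  have sl: "s < b ^ r" unfolding s_def using bp by simp
  have "b ^ (l - 1) > 0" using assms by simp
  then have np: "n > 0" using r(1) unfolding n_def by linarith
  have dc: "digit_count b d N = digit_count b d n + cnt b d r s"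
    unfolding Ne by (rule dc_split[OF assms(1) np sl])
  have "n \<in> S" using r N dc unfolding S_def n_def by auto
  moreover have "(r, s) \<in> PP b d (k - digit_count b d n)" using sl dc N unfolding PP_def by auto
  ultimately show "\<exists>x\<in>Sigma S (\<lambda>n. PP b d (k - digit_count b d n)). N = (case x of (n, r, s) \<Rightarrow> n * b ^ r + s)"
    using Ne by (intro bexI[of _ "(n, (r, s))"]) auto
qed


lemma series_part:
  fixes b d k l :: nat
  assumes "b \<ge> 2" "d < b" "l \<ge> 1"
  defines "S \<equiv> {n. b ^ (l - 1) \<le> n \<and> n < b ^ l \<and> digit_count b d n \<le> k}"
  defines "t \<equiv> (\<lambda>m. \<Sum>n\<in>S. vv b d (k - digit_count b d n) m / real (n + 1) ^ (m + 1))"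
  shows "summable (\<lambda>m. t (m + 1)) \<and>
          irwin_sum b d k =
            (\<Sum>n\<in>{n. 0 < n \<and> n < b ^ (l - 1) \<and> digit_count b d n = k}. 1 / real n)
            + real b * (\<Sum>n\<in>S. 1 / real (n + 1))
            + (\<Sum>m. t (m + 1))"
proof -
  define V where "V n = (\<Sum>m. vv b d (k - digit_count b d n) m / real (n + 1) ^ (m + 1))" for n
  define Abig where "Abig = {N. b ^ (l - 1) \<le> N \<and> digit_count b d N = k}"
  define Asmall where "Asmall = {n. 0 < n \<and> n < b ^ (l - 1) \<and> digit_count b d n = k}"
  have b1: "b ^ (l - 1) \<ge> 1" using assms by simp
  have finS: "finite S" unfolding S_def by (rule finite_subset[of _ "{..<b ^ l}"]) auto
  have Sge1: "n \<ge> 1" if "n \<in> S" for n using that b1 unfolding S_def by auto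
  have D: "((\<lambda>(n, (r, s)). 1 / real (n * b ^ r + s)) has_sum (\<Sum>n\<in>S. V n))
            (Sigma S (\<lambda>n. PP b d (k - digit_count b d n)))"
  proof (rule fub)
    fix n assume "n \<in> S"
    then show "((\<lambda>y. case (n, y) of (n, r, s) \<Rightarrow> 1 / real (n * b ^ r + s)) has_sum V n) (PP b d (k - digit_count b d n))"
      using block_has_sum[OF assms(1,2) Sge1, of n "k - digit_count b d n"] unfolding V_def
      by (simp add: case_prod_unfold)
  next
    show "(V has_sum sum V S) S" using finS by (simp add: has_sum_finiteI)
  qed (auto simp: case_prod_unfold)
  have big: "((\<lambda>N. 1 / real N) has_sum (\<Sum>n\<in>S. V n)) Abig"
  proof -
    have "((\<lambda>x. 1 / real ((\<lambda>(n, (r, s)). n * b ^ r + s) x)) has_sum (\<Sum>n\<in>S. V n))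
            (Sigma S (\<lambda>n. PP b d (k - digit_count b d n)))"
      using D by (simp add: case_prod_unfold)
    then show ?thesis
      using has_sum_reindex_bij_betw[OF decomp_bij[OF assms(1,2,3), of k, folded S_def]]
      unfolding Abig_def by blast
  qed
  have small: "((\<lambda>N. 1 / real N) has_sum (\<Sum>n\<in>Asmall. 1 / real n)) Asmall"
    by (rule has_sum_finiteI) (auto simp: Asmall_def intro: finite_subset[of _ "{..<b ^ (l - 1)}"])
  have un: "Asmall \<union> Abig = {n. 0 < n \<and> digit_count b d n = k}"
    unfolding Asmall_def Abig_def using b1 by auto
  have "((\<lambda>N. 1 / real N) has_sum ((\<Sum>n\<in>Asmall. 1 / real n) + (\<Sum>n\<in>S. V n))) {n. 0 < n \<and> digit_count b d n = k}"
    unfolding un[symmetric]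
    by (rule has_sum_Un_disjoint[OF small big]) (auto simp: Asmall_def Abig_def)
  then have irw: "irwin_sum b d k = (\<Sum>n\<in>Asmall. 1 / real n) + (\<Sum>n\<in>S. V n)"
    unfolding irwin_sum_def by (rule infsumI)
  have sm: "summable (\<lambda>m. vv b d (k - digit_count b d n) (Suc m) / real (n + 1) ^ (Suc m + 1))" if "n \<in> S" for n
    using V_summable[OF assms(1,2) Sge1[OF that]] by (subst summable_Suc_iff)
  have Vn: "V n = real b * (1 / real (n + 1)) + (\<Sum>m. vv b d (k - digit_count b d n) (Suc m) / real (n + 1) ^ (Suc m + 1))"
    if "n \<in> S" for n
    using suminf_split_head[OF V_summable[OF assms(1,2) Sge1[OF that]]] unfolding V_def by (simp add: vv_m0)
  have "(\<Sum>n\<in>S. V n) = real b * (\<Sum>n\<in>S. 1 / real (n + 1))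
        + (\<Sum>n\<in>S. \<Sum>m. vv b d (k - digit_count b d n) (Suc m) / real (n + 1) ^ (Suc m + 1))"
    by (simp add: Vn sum.distrib sum_distrib_left)
  also have "(\<Sum>n\<in>S. \<Sum>m. vv b d (k - digit_count b d n) (Suc m) / real (n + 1) ^ (Suc m + 1)) = (\<Sum>m. t (m + 1))"
    unfolding t_def using suminf_sum[of S, OF sm] by simp
  finally have e: "(\<Sum>n\<in>S. V n) = real b * (\<Sum>n\<in>S. 1 / real (n + 1)) + (\<Sum>m. t (m + 1))" .
  have "summable (\<lambda>m. t (m + 1))"
    unfolding t_def using summable_sum[of S, OF sm] by simp
  then show ?thesis using irw e unfolding Asmall_def by simp
qed

theorem mainTheorem2:
  fixes b d :: nat
  assumes "b \<ge> 2" and "d < b"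
  shows
   "(\<forall>l k. l \<ge> 1 \<longrightarrow>
      (let S = {n. b ^ (l - 1) \<le> n \<and> n < b ^ l \<and> digit_count b d n \<le> k};
           t = (\<lambda>m. \<Sum>n\<in>S. vv b d (k - digit_count b d n) m / real (n + 1) ^ (m + 1))
       in summable (\<lambda>m. t (m + 1)) \<and>
          irwin_sum b d k =
            (\<Sum>n\<in>{n. 0 < n \<and> n < b ^ (l - 1) \<and> digit_count b d n = k}. 1 / real n)
            + real b * (\<Sum>n\<in>S. 1 / real (n + 1))
            + (\<Sum>m. t (m + 1))))
    \<and> (\<forall>j. vv b d j 0 = real b)
    \<and> (\<forall>j m. m \<ge> 1 \<longrightarrow> 0 < vv b d j m \<and> vv b d j m \<le> real b)
    \<and> (\<forall>j. \<not> (b = 2 \<and> d = 1 \<and> j = 0) \<longrightarrow>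
          (\<forall>m m'. m < m' \<longrightarrow> vv b d j m' < vv b d j m))
    \<and> (b = 2 \<and> d = 1 \<longrightarrow> (\<forall>m. vv b d 0 m = 2))
    \<and> (\<forall>m. m \<ge> 1 \<longrightarrow>
          (\<forall>j j'. j < j' \<longrightarrow> vv b d j' m < vv b d j m)
          \<and> (\<lambda>j. vv b d j m) \<longlonglongrightarrow> real b / real (m + 1))"
proof (intro conjI allI impI)
  fix l k :: nat assume "l \<ge> 1"
  then show "let S = {n. b ^ (l - 1) \<le> n \<and> n < b ^ l \<and> digit_count b d n \<le> k};
           t = (\<lambda>m. \<Sum>n\<in>S. vv b d (k - digit_count b d n) m / real (n + 1) ^ (m + 1))
       in summable (\<lambda>m. t (m + 1)) \<and>
          irwin_sum b d k =
            (\<Sum>n\<in>{n. 0 < n \<and> n < b ^ (l - 1) \<and> digit_count b d n = k}. 1 / real n)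
            + real b * (\<Sum>n\<in>S. 1 / real (n + 1))
            + (\<Sum>m. t (m + 1))"
    unfolding Let_def by (rule series_part[OF assms])
next
  fix j show "vv b d j 0 = real b" by (rule vv_m0)
next
  fix j m :: nat show "0 < vv b d j m" by (rule vv_pos[OF assms])
next
  fix j m :: nat show "vv b d j m \<le> real b" by (rule vv_le_b[OF assms])
next
  fix j m m' :: nat assume "\<not> (b = 2 \<and> d = 1 \<and> j = 0)" "m < m'"
  then show "vv b d j m' < vv b d j m" by (rule vv_strict_m[OF assms])
next
  fix m assume "b = 2 \<and> d = 1"
  then show "vv b d 0 m = 2" using vv_exc by simp
next
  fix m j j' :: nat assume "m \<ge> 1" "j < j'"
  then show "vv b d j' m < vv b d j m" by (rule vv_dec_j[OF assms])
next
  fix m :: nat assume "m \<ge> 1"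
  show "(\<lambda>j. vv b d j m) \<longlonglongrightarrow> real b / real (m + 1)" by (rule vv_lim[OF assms])
qed

end
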